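(* Let $a\geq 0$ and $b\in\mathbb{Z}/11\mathbb{Z}$. Then $\operatorname{Hom}(\mathcal{O},\mathcal{O}(a,b))\neq 0$ on $X_w$ unless either $a=0$ and $b\neq 0$, or $(a,b)\in\mathbb{X}:=\{(1,0),(1,2),(1,6),(1,7),(1,8),(1,10),(2,0)\}$.
   Context: Let $w=x_1^2x_2+x_2^2x_3+x_3^2x_4+x_4^2x_5+x_5^2x_1$, $\Gamma_w=\{(t_1,\ldots,t_6)\in\mathbb{G}_m^{6} : w(t_1x_1,\ldots,t_5x_5)=t_6\,w(x)\}$ acting on $\mathbb{A}^5$ via the first $5$ coordinates, and $X_w=[(\operatorname{Spec}(\mathbb{C}[x_1,\ldots,x_5]/(w))\setminus 0)/\Gamma_w]$. One has $\Gamma_w\cong\mathbb{G}_m\times\mathbb{Z}/11\mathbb{Z}$, where $\mathbb{G}_m$ acts by $\lambda\cdot x=(\lambda x_1,\ldots,\lambda x_5)$ and $\mathbb{Z}/11\mathbb{Z}$ is generated by $\rho=(\xi,\xi^9,\xi^4,\xi^3,\xi^5)$ with $\xi$ a primitive $11$th root of unity; so $X_w=[Z_w/\langle\rho\rangle]$ with $Z_w\subset\mathbb{P}^4$ the cubic threefold $w=0$, and $\operatorname{Pic}(X_w)\cong\mathbb{Z}\times\mathbb{Z}/11\mathbb{Z}$. For $(a,b)\in\mathbb{Z}\times\mathbb{Z}/11\mathbb{Z}$, $\mathcal{O}(a,b)$ denotes the corresponding line bundle, normalized so that, grading $\mathbb{C}[x_1,\ldots,x_5]$ by $\mathbb{Z}\times\mathbb{Z}/11\mathbb{Z}$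 with $\deg x_1=(1,1)$, $\deg x_2=(1,9)$, $\deg x_3=(1,4)$, $\deg x_4=(1,3)$, $\deg x_5=(1,5)$, the space $\operatorname{Hom}(\mathcal{O},\mathcal{O}(a,b))$ is the bidegree-$(a,b)$ part of $\mathbb{C}[x_1,\ldots,x_5]/(w)$; and $\mathcal{O}=\mathcal{O}(0,0)$. *)

theory Defs
  imports Complex_Main "HOL-Library.Poly_Mapping" "HOL-Library.Product_Plus"
begin

text \<open>Exponent vectors (e1,...,e5) of monomials x1^e1 ... x5^e5 in C[x1,...,x5];
  componentwise addition corresponds to multiplying monomials.\<close>
type_synonym mon5 = "nat \<times> nat \<times> nat \<times> nat \<times> nat"

type_synonym poly5 = "mon5 \<Rightarrow>\<^sub>0 complex"

definition X5 :: "mon5 \<Rightarrow> poly5" where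
  "X5 m = Poly_Mapping.single m 1"

definition w_poly :: poly5 where
  "w_poly = X5 (2,1,0,0,0) + X5 (0,2,1,0,0) + X5 (0,0,2,1,0) + X5 (0,0,0,2,1) + X5 (1,0,0,0,2)"

fun mdeg :: "mon5 \<Rightarrow> nat" where
  "mdeg (e1,e2,e3,e4,e5) = e1 + e2 + e3 + e4 + e5"

fun mgrade :: "mon5 \<Rightarrow> nat" where
  "mgrade (e1,e2,e3,e4,e5) = (e1 + 9*e2 + 4*e3 + 3*e4 + 5*e5) mod 11"

definition bihom :: "nat \<Rightarrow> nat \<Rightarrow> poly5 set" where
  "bihom a b = {p. \<forall>m\<in>Poly_Mapping.keys p. mdeg m = a \<and> mgrade m = b mod 11}"

definition w_ideal :: "poly5 set" where
  "w_ideal = {w_poly * q | q. True}"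

text \<open>Hom(O, O(a,b)) = bidegree-(a,b) part of C[x1..x5]/(w), i.e. bihom a b modulo
  (bihom a b \<inter> (w)); it is nonzero iff some bihomogeneous element is not in (w).\<close>
definition Hom_nonzero :: "nat \<Rightarrow> nat \<Rightarrow> bool" where
  "Hom_nonzero a b \<longleftrightarrow> (\<exists>p\<in>bihom a b. p \<notin> w_ideal)"

definition exceptional_set :: "(nat \<times> nat) set" where
  "exceptional_set = {(1,0),(1,2),(1,6),(1,7),(1,8),(1,10),(2,0)}"

end

theory Submission
  imports Defs
begin

fun pval :: "mon5 \<Rightarrow> complex" where
  "pval (e1,e2,e3,e4,e5) = (-3)^e1 * (-3)^e2 * 2^e3 * 2^e4 * 1^e5"

lemma pval_add: "pval (m + n) = pval m * pval n"
  by (cases m; cases n) (simp add: power_add)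

lemma pval_nz: "pval m \<noteq> 0"
  by (cases m) simp

definition ev :: "poly5 \<Rightarrow> complex" where
  "ev p = (\<Sum>k\<in>Poly_Mapping.keys p. Poly_Mapping.lookup p k * pval k)"

lemma ev_superset: "finite A \<Longrightarrow> Poly_Mapping.keys p \<subseteq> A \<Longrightarrow> ev p = (\<Sum>k\<in>A. Poly_Mapping.lookup p k * pval k)"
  unfolding ev_def
  by (rule sum.mono_neutral_left) (auto simp: in_keys_iff)

lemma ev_add: "ev (p + q) = ev p + ev q"
proof -
  let ?A = "Poly_Mapping.keys p \<union> Poly_Mapping.keys q"
  have "ev (p + q) = (\<Sum>k\<in>?A. Poly_Mapping.lookup (p+q) k * pval k)"
    by (rule ev_superset) (auto simp: Poly_Mapping.keys_add)
  also have "\<dots> = (\<Sum>k\<in>?A. Poly_Mapping.lookup p k * pval k) + (\<Sum>k\<in>?A. Poly_Mapping.lookup q k * pval k)"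
    by (simp add: lookup_add distrib_right sum.distrib)
  also have "\<dots> = ev p + ev q"
    using ev_superset[of ?A p] ev_superset[of ?A q] by auto
  finally show ?thesis .
qed

lemma ev_zero: "ev 0 = 0" by (simp add: ev_def)

lemma ev_single: "ev (Poly_Mapping.single a c) = c * pval a"
  by (simp add: ev_def)

lemma update_eq: "a \<notin> Poly_Mapping.keys f \<Longrightarrow> Poly_Mapping.update a b f = f + Poly_Mapping.single a b"
  by (rule poly_mapping_eqI) (auto simp: lookup_update lookup_add lookup_single in_keys_iff when_def)

lemma ev_mult_single: "ev (Poly_Mapping.single a c * q) = c * pval a * ev q"
proof (induction q rule: update_induct)
  case const then show ?case by (simp add: ev_zero)
next
  case (update f x y)
  then show ?case
    by (simp add: update_eq distrib_left ev_add mult_single ev_single pval_add)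
qed

lemma ev_mult: "ev (p * q) = ev p * ev q"
proof (induction p rule: update_induct)
  case const then show ?case by (simp add: ev_zero)
next
  case (update f x y)
  then show ?case
    by (simp add: update_eq distrib_right ev_add ev_mult_single ev_single)
qed

lemma ev_w: "ev w_poly = 0"
  by (simp add: w_poly_def X5_def ev_add ev_single)

lemma mono_not_in: "X5 m \<notin> w_ideal"
proof
  assume "X5 m \<in> w_ideal"
  then obtain q where "X5 m = w_poly * q" by (auto simp: w_ideal_def)
  then have "ev (X5 m) = 0" by (simp add: ev_mult ev_w)
  then show False by (simp add: X5_def ev_single pval_nz)
qed

lemma mono_bihom: "X5 m \<in> bihom (mdeg m) (mgrade m)"
  by (cases m) (simp add: bihom_def X5_def)

lemma hom_of_mono: "mdeg m = a \<Longrightarrow> mgrade m = b \<Longrightarrow> Hom_nonzero a b"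
  using mono_bihom mono_not_in unfolding Hom_nonzero_def by blast

lemma deg1:
  assumes "r \<in> {1,3,4,5,9}"
  shows "\<exists>m. mdeg m = 1 \<and> mgrade m = r"
proof -
  have "mdeg (1,0,0,0,0) = 1 \<and> mgrade (1,0,0,0,0) = 1" by simp
  note w1 = this
  have "mdeg (0,0,0,1,0) = 1 \<and> mgrade (0,0,0,1,0) = 3" by simp
  note w3 = this
  have "mdeg (0,0,1,0,0) = 1 \<and> mgrade (0,0,1,0,0) = 4" by simp
  note w4 = this
  have "mdeg (0,0,0,0,1) = 1 \<and> mgrade (0,0,0,0,1) = 5" by simp
  note w5 = this
  have "mdeg (0,1,0,0,0) = 1 \<and> mgrade (0,1,0,0,0) = 9" by simp
  note w9 = this
  show ?thesis using assms w1 w3 w4 w5 w9 by blast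
qed

lemma deg2:
  assumes "r \<in> {1,2,3,4,5,6,7,8,9,10}"
  shows "\<exists>m. mdeg m = 2 \<and> mgrade m = r"
proof -
  have "mdeg (0,1,0,1,0) = 2 \<and> mgrade (0,1,0,1,0) = 1" by simp
  note w1 = this
  have "mdeg (0,1,1,0,0) = 2 \<and> mgrade (0,1,1,0,0) = 2" by simp
  note w2 = this
  have "mdeg (0,1,0,0,1) = 2 \<and> mgrade (0,1,0,0,1) = 3" by simp
  note w3 = this
  have "mdeg (1,0,0,1,0) = 2 \<and> mgrade (1,0,0,1,0) = 4" by simp
  note w4 = this
  have "mdeg (1,0,1,0,0) = 2 \<and> mgrade (1,0,1,0,0) = 5" by simp
  note w5 = this
  have "mdeg (0,0,0,2,0) = 2 \<and> mgrade (0,0,0,2,0) = 6" by simp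
  note w6 = this
  have "mdeg (0,0,1,1,0) = 2 \<and> mgrade (0,0,1,1,0) = 7" by simp
  note w7 = this
  have "mdeg (0,0,0,1,1) = 2 \<and> mgrade (0,0,0,1,1) = 8" by simp
  note w8 = this
  have "mdeg (0,0,1,0,1) = 2 \<and> mgrade (0,0,1,0,1) = 9" by simp
  note w9 = this
  have "mdeg (0,0,0,0,2) = 2 \<and> mgrade (0,0,0,0,2) = 10" by simp
  note w10 = this
  show ?thesis using assms w1 w2 w3 w4 w5 w6 w7 w8 w9 w10 by blast
qed

lemma deg3:
  assumes "r \<in> {0,1,2,3,4,5,6,7,8,9,10}"
  shows "\<exists>m. mdeg m = 3 \<and> mgrade m = r"
proof -
  have "mdeg (0,0,0,2,1) = 3 \<and> mgrade (0,0,0,2,1) = 0" by simp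
  note w0 = this
  have "mdeg (0,0,1,1,1) = 3 \<and> mgrade (0,0,1,1,1) = 1" by simp
  note w1 = this
  have "mdeg (0,0,0,1,2) = 3 \<and> mgrade (0,0,0,1,2) = 2" by simp
  note w2 = this
  have "mdeg (0,0,1,0,2) = 3 \<and> mgrade (0,0,1,0,2) = 3" by simp
  note w3 = this
  have "mdeg (0,0,0,0,3) = 3 \<and> mgrade (0,0,0,0,3) = 4" by simp
  note w4 = this
  have "mdeg (0,1,1,1,0) = 3 \<and> mgrade (0,1,1,1,0) = 5" by simp
  note w5 = this
  have "mdeg (0,1,0,1,1) = 3 \<and> mgrade (0,1,0,1,1) = 6" by simp
  note w6 = this
  have "mdeg (0,1,1,0,1) = 3 \<and> mgrade (0,1,1,0,1) = 7" by simp
  note w7 = this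
  have "mdeg (0,1,0,0,2) = 3 \<and> mgrade (0,1,0,0,2) = 8" by simp
  note w8 = this
  have "mdeg (0,0,0,3,0) = 3 \<and> mgrade (0,0,0,3,0) = 9" by simp
  note w9 = this
  have "mdeg (0,0,1,2,0) = 3 \<and> mgrade (0,0,1,2,0) = 10" by simp
  note w10 = this
  show ?thesis using assms w0 w1 w2 w3 w4 w5 w6 w7 w8 w9 w10 by blast
qed

lemma lt11: "(r::nat) < 11 \<Longrightarrow> r \<in> {0,1,2,3,4,5,6,7,8,9,10}"
  by (simp add: eval_nat_numeral less_Suc_eq)

lemma modk: "((k::nat) + (b + 10 * k) mod 11) mod 11 = (b + 11 * k) mod 11"
proof -
  have "((k::nat) + (b + 10 * k) mod 11) mod 11 = (k + (b + 10 * k)) mod 11"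
    by (rule mod_add_right_eq)
  moreover have "k + (b + 10 * k) = b + 11 * k" by simp
  ultimately show ?thesis by simp
qed

lemma big: "b < 11 \<Longrightarrow> \<exists>m. mdeg m = k + 3 \<and> mgrade m = b"
proof -
  assume b: "b < 11"
  obtain m where m: "mdeg m = 3" "mgrade m = (b + 10 * k) mod 11"
    using deg3[OF lt11[of "(b + 10 * k) mod 11"]] by auto
  obtain e1 e2 e3 e4 e5 where me: "m = (e1,e2,e3,e4,e5)" by (cases m) auto
  have "mgrade (k + e1, e2, e3, e4, e5) = (k + (e1 + 9*e2 + 4*e3 + 3*e4 + 5*e5)) mod 11"
    by (simp add: add.assoc)
  also have "\<dots> = (k + (e1 + 9*e2 + 4*e3 + 3*e4 + 5*e5) mod 11) mod 11"
    by (simp add: mod_add_right_eq)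
  also have "\<dots> = (k + (b + 10 * k) mod 11) mod 11" using m me by simp
  also have "\<dots> = (b + 11 * k) mod 11" by (rule modk)
  also have "\<dots> = b" using b by simp
  finally show ?thesis using m me by (intro exI[of _ "(k + e1, e2, e3, e4, e5)"]) simp
qed

theorem lemma4p1:
  fixes a b :: nat
  assumes "b < 11"
    and "\<not> (a = 0 \<and> b \<noteq> 0)"
    and "(a, b) \<notin> exceptional_set"
  shows "Hom_nonzero a b"
proof -
  have "\<exists>m. mdeg m = a \<and> mgrade m = b"
  proof (cases "a \<ge> 3")
    case True
    then have "a = (a - 3) + 3" by simp
    then show ?thesis using big[OF assms(1), of "a - 3"] by metis
  next
    case False
    then have "a = 0 \<or> a = 1 \<or> a = 2" by auto
    then show ?thesis
    proof (elim disjE)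
      assume "a = 0"
      then have "b = 0" using assms(2) by simp
      have "mdeg (0,0,0,0,0) = 0 \<and> mgrade (0,0,0,0,0) = 0" by simp
      then show ?thesis using \<open>a = 0\<close> \<open>b = 0\<close> by blast
    next
      assume a1: "a = 1"
      have ex: "b \<noteq> 0 \<and> b \<noteq> 2 \<and> b \<noteq> 6 \<and> b \<noteq> 7 \<and> b \<noteq> 8 \<and> b \<noteq> 10"
        using assms(3) a1 unfolding exceptional_set_def by (simp only: insert_iff prod.inject) simp
      have bb: "b \<in> {1,3,4,5,9}" using lt11[OF assms(1)] ex by auto
      show ?thesis unfolding a1 by (rule deg1[OF bb])
    next
      assume a2: "a = 2"
      have "b \<noteq> 0" using assms(3) a2 unfolding exceptional_set_def by (simp only: insert_iff prod.inject) simp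
      then have bb: "b \<in> {1,2,3,4,5,6,7,8,9,10}" using lt11[OF assms(1)] by auto
      show ?thesis unfolding a2 by (rule deg2[OF bb])
    qed
  qed
  then obtain m where "mdeg m = a" "mgrade m = b" by blast
  then show ?thesis by (rule hom_of_mono)
qed

end
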